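(* Let $\Sigma_0$ be a smooth, non-null, codimension-$k$ surface in a $d$-dimensional spacetime, and let $\Sigma_{\lambda_1,\dots,\lambda_k}$ be a $k$-parameter deformation of $\Sigma_0$ whose normal subspaces (the normal bundles of the leaves) form a locally integrable distribution. Extend the unit $k$-normal form $\mathbf{N}$ to a neighborhood as the unit $k$-normal form of the leaves of the deformation. Then the divergence $\nabla_a N^{a\cdots}$ has support only along directions normal to the leaves of the deformation, i.e. it vanishes whenever a vector tangent to the leaves is contracted into any of its free indices. In particular, its restriction $\nabla_a N^{a\cdots}|_{\Sigma_0}$ is supported in the normal bundle $\mathrm{N}(\Sigma_0)$.
   Context: A $k$-parameter deformation of a codimension-$k$ surface $\Sigma_0$ is a smooth family of codimension-$k$ surfaces $\Sigma_{\lambda_1,\dots,\lambda_k}$ that coincides with $\Sigma_0$ at $\lambda_1=\dots=\lambda_k=0$ and foliates a neighborhood. For a non-null codimension-$k$ surface, the unit $k$-normal form is the unique $k$-form $N_{a_1\dots a_k}$ on its normal bundle satisfying $N_{a_1\dots a_k}N^{a_1\dots a_k}=(-1)^s k!$, where $s$ is the number of minus signs in the signature of the normal bundle, with sign fixed by a chosen orientation. *)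

theory Defs
  imports "HOL-Analysis.Analysis"
begin

text \<open>Local coordinate rendering. The spacetime (a neighbourhood of Sigma_0) is
an open set U in R^d, d = CARD('n); the metric is a matrix-valued function g.\<close>

definition pd :: "'n::finite \<Rightarrow> (real^'n \<Rightarrow> real) \<Rightarrow> real^'n \<Rightarrow> real" where
  "pd i f x = frechet_derivative f (at x) (axis i 1)"

fun Ck :: "nat \<Rightarrow> (real^'n::finite) set \<Rightarrow> (real^'n \<Rightarrow> real) \<Rightarrow> bool" where
  "Ck 0 U f = continuous_on U f"
| "Ck (Suc m) U f = (f differentiable_on U \<and> (\<forall>i. Ck m U (pd i f)))"

definition smooth_on :: "(real^'n::finite) set \<Rightarrow> (real^'n \<Rightarrow> real) \<Rightarrow> bool" where
  "smooth_on U f = (\<forall>m. Ck m U f)"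

definition grad :: "(real^'n::finite \<Rightarrow> real) \<Rightarrow> real^'n \<Rightarrow> real^'n" where
  "grad f x = (\<chi> a. pd a f x)"

definition lin_indep_fam :: "(nat \<Rightarrow> real^'n::finite) \<Rightarrow> nat \<Rightarrow> bool" where
  "lin_indep_fam v m = (\<forall>c. (\<Sum>i<m. c i *\<^sub>R v i) = 0 \<longrightarrow> (\<forall>i<m. c i = 0))"

definition ginv :: "(real^'n::finite \<Rightarrow> real^'n^'n) \<Rightarrow> real^'n \<Rightarrow> real^'n^'n" where
  "ginv g x = matrix_inv (g x)"

definition gdot :: "(real^'n::finite \<Rightarrow> real^'n^'n) \<Rightarrow> real^'n \<Rightarrow> real^'n \<Rightarrow> real^'n \<Rightarrow> real" where
  "gdot g x v w = (\<Sum>a\<in>UNIV. \<Sum>b\<in>UNIV. g x $ a $ b * v $ a * w $ b)"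

definition lorentzian_at :: "(real^'n::finite \<Rightarrow> real^'n^'n) \<Rightarrow> real^'n \<Rightarrow> bool" where
  "lorentzian_at g x = (\<exists>(P :: real^'n^'n) i0. invertible P \<and>
      transpose P ** g x ** P = (\<chi> i j. if i = j then (if i = i0 then -1 else 1) else 0))"

definition christoffel :: "(real^'n::finite \<Rightarrow> real^'n^'n) \<Rightarrow> real^'n \<Rightarrow> 'n \<Rightarrow> 'n \<Rightarrow> 'n \<Rightarrow> real" where
  "christoffel g x a b c = (1/2) * (\<Sum>e\<in>UNIV. ginv g x $ a $ e *
      (pd b (\<lambda>y. g y $ e $ c) x + pd c (\<lambda>y. g y $ e $ b) x - pd e (\<lambda>y. g y $ b $ c) x))"

definition klists :: "nat \<Rightarrow> ('n::finite) list set" where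
  "klists k = {as. length as = k}"

text \<open>Raising all indices of a covariant tensor field T (components T x [a1,...,ak]).\<close>
definition raise :: "(real^'n::finite \<Rightarrow> real^'n^'n) \<Rightarrow> (real^'n \<Rightarrow> 'n list \<Rightarrow> real)
    \<Rightarrow> real^'n \<Rightarrow> 'n list \<Rightarrow> real" where
  "raise g T x as = (\<Sum>bs\<in>klists (length as).
      (\<Prod>j<length as. ginv g x $ (as ! j) $ (bs ! j)) * T x bs)"

text \<open>Covariant divergence nabla_a M^{a b2 ... bk} of a contravariant tensor field M.\<close>
definition cov_div :: "(real^'n::finite \<Rightarrow> real^'n^'n) \<Rightarrow> (real^'n \<Rightarrow> 'n list \<Rightarrow> real)
    \<Rightarrow> real^'n \<Rightarrow> 'n list \<Rightarrow> real" where
  "cov_div g M x bs = (\<Sum>a\<in>UNIV. pd a (\<lambda>y. M y (a # bs)) x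
      + (\<Sum>j<length (a # bs). \<Sum>e\<in>UNIV. christoffel g x ((a # bs) ! j) a e * M x ((a # bs)[j := e])))"

text \<open>The deformation: leaves are the level sets {x. \<forall>i<k. Phi i x = lambda_i}.\<close>
definition tangent_vec :: "(nat \<Rightarrow> real^'n::finite \<Rightarrow> real) \<Rightarrow> nat \<Rightarrow> real^'n \<Rightarrow> real^'n \<Rightarrow> bool" where
  "tangent_vec \<Phi> k x t = (\<forall>i<k. grad (\<Phi> i) x \<bullet> t = 0)"

definition normal_space :: "(real^'n::finite \<Rightarrow> real^'n^'n) \<Rightarrow> (nat \<Rightarrow> real^'n \<Rightarrow> real)
    \<Rightarrow> nat \<Rightarrow> real^'n \<Rightarrow> (real^'n) set" where
  "normal_space g \<Phi> k x = span ((\<lambda>i. ginv g x *v grad (\<Phi> i) x) ` {..<k})"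

definition non_null_at :: "(real^'n::finite \<Rightarrow> real^'n^'n) \<Rightarrow> (nat \<Rightarrow> real^'n \<Rightarrow> real)
    \<Rightarrow> nat \<Rightarrow> real^'n \<Rightarrow> bool" where
  "non_null_at g \<Phi> k x = (\<forall>v\<in>normal_space g \<Phi> k x.
      (\<forall>w\<in>normal_space g \<Phi> k x. gdot g x v w = 0) \<longrightarrow> v = 0)"

definition normal_minus_signs :: "(real^'n::finite \<Rightarrow> real^'n^'n) \<Rightarrow> (nat \<Rightarrow> real^'n \<Rightarrow> real)
    \<Rightarrow> nat \<Rightarrow> real^'n \<Rightarrow> nat \<Rightarrow> bool" where
  "normal_minus_signs g \<Phi> k x s = (\<exists>e :: nat \<Rightarrow> real^'n.
      (\<forall>i<k. e i \<in> normal_space g \<Phi> k x) \<and>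
      (\<forall>i<k. \<forall>j<k. i \<noteq> j \<longrightarrow> gdot g x (e i) (e j) = 0) \<and>
      (\<forall>i<k. gdot g x (e i) (e i) = 1 \<or> gdot g x (e i) (e i) = -1) \<and>
      s = card {i. i < k \<and> gdot g x (e i) (e i) = -1})"

text \<open>The normal distribution is locally integrable: near every point it is the
tangent distribution of the level sets of d-k smooth functions with independent
differentials (i.e. it has local integral manifolds).\<close>
definition normal_integrable :: "(real^'n::finite \<Rightarrow> real^'n^'n) \<Rightarrow> (nat \<Rightarrow> real^'n \<Rightarrow> real)
    \<Rightarrow> nat \<Rightarrow> (real^'n) set \<Rightarrow> bool" where
  "normal_integrable g \<Phi> k U = (\<forall>x\<in>U. \<exists>V (\<psi> :: nat \<Rightarrow> real^'n \<Rightarrow> real).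
      open V \<and> x \<in> V \<and> V \<subseteq> U \<and>
      (\<forall>j < CARD('n) - k. smooth_on V (\<psi> j)) \<and>
      (\<forall>y\<in>V. lin_indep_fam (\<lambda>j. grad (\<psi> j) y) (CARD('n) - k) \<and>
         {v. \<forall>j < CARD('n) - k. grad (\<psi> j) y \<bullet> v = 0} = normal_space g \<Phi> k y))"

end

theory Submission
  imports Defs
begin



lemma smooth_Ck: "smooth_on U f \<Longrightarrow> Ck m U f"
  by (simp add: smooth_on_def)

lemma smooth_pd: "smooth_on U f \<Longrightarrow> smooth_on U (pd i f)"
  unfolding smooth_on_def by (metis Ck.simps(2))

lemma smooth_diff:
  assumes "open U" "x \<in> U" "smooth_on U f" shows "f differentiable (at x)"
proof -
  have "f differentiable_on U" using smooth_Ck[OF assms(3), of 1] by simp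
  then show ?thesis using assms differentiable_on_eq_differentiable_at by blast
qed

lemma smooth_cont:
  assumes "open U" "x \<in> U" "smooth_on U f" shows "isCont f x"
proof -
  have "continuous_on U f" using smooth_Ck[OF assms(3), of 0] by simp
  then show ?thesis using assms continuous_on_eq_continuous_at by blast
qed

lemma pd_eq: "(f has_derivative f') (at x) \<Longrightarrow> pd i f x = f' (axis i 1)"
  unfolding pd_def using frechet_derivative_at by metis

lemma pd_add:
  assumes "f differentiable (at x)" "g differentiable (at x)"
  shows "pd i (\<lambda>y. f y + g y) x = pd i f x + pd i g x"
proof -
  have "((\<lambda>y. f y + g y) has_derivative (\<lambda>h. frechet_derivative f (at x) h + frechet_derivative g (at x) h)) (at x)"
    using assms by (intro has_derivative_add) (auto simp: frechet_derivative_works)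
  from pd_eq[OF this, of i] show ?thesis by (simp add: pd_def)
qed

lemma pd_mult:
  assumes "f differentiable (at x)" "g differentiable (at x)"
  shows "pd i (\<lambda>y. f y * g y) x = pd i f x * g x + f x * pd i g x"
proof -
  have "((\<lambda>y. f y * g y) has_derivative (\<lambda>h. f x * frechet_derivative g (at x) h + frechet_derivative f (at x) h * g x)) (at x)"
    using assms by (intro has_derivative_mult) (auto simp: frechet_derivative_works)
  from pd_eq[OF this, of i] show ?thesis by (simp add: pd_def)
qed

lemma pd_sum:
  fixes f :: "'s \<Rightarrow> real^'n::finite \<Rightarrow> real"
  assumes "finite S" "\<And>s. s \<in> S \<Longrightarrow> f s differentiable (at x)"
  shows "pd i (\<lambda>y. \<Sum>s\<in>S. f s y) x = (\<Sum>s\<in>S. pd i (f s) x)"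
proof -
  have "((\<lambda>y. \<Sum>s\<in>S. f s y) has_derivative (\<lambda>h. \<Sum>s\<in>S. frechet_derivative (f s) (at x) h)) (at x)"
    using assms by (intro has_derivative_sum) (auto simp: frechet_derivative_works)
  from pd_eq[OF this, of i] show ?thesis by (simp add: pd_def)
qed

lemma pd_local_zero:
  assumes "open V" "x \<in> V" "\<And>y. y \<in> V \<Longrightarrow> f y = 0"
  shows "pd i f x = 0"
proof -
  have "((\<lambda>y. 0) has_derivative (\<lambda>h. 0)) (at x)" by simp
  then have "(f has_derivative (\<lambda>h. 0)) (at x)"
    by (rule has_derivative_transform_within_open[OF _ assms(1,2)]) (use assms(3) in auto)
  then show ?thesis by (simp add: pd_eq)
qed

lemma differentiable_prod_at:
  fixes f :: "'i \<Rightarrow> 'a::real_normed_vector \<Rightarrow> real"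
  assumes "\<And>i. i \<in> I \<Longrightarrow> f i differentiable (at x)"
  shows "(\<lambda>y. \<Prod>i\<in>I. f i y) differentiable (at x)"
proof -
  from assms obtain f' where "\<And>i. i \<in> I \<Longrightarrow> (f i has_derivative f' i) (at x)"
    unfolding differentiable_def by metis
  then show ?thesis unfolding differentiable_def
    using has_derivative_prod by blast
qed

lemma dir_deriv:
  fixes F :: "real^'n::finite \<Rightarrow> real"
  assumes "F differentiable (at (y + s *\<^sub>R u))"
  shows "((\<lambda>s. F (y + s *\<^sub>R u)) has_real_derivative frechet_derivative F (at (y + s *\<^sub>R u)) u) (at s)"
proof -
  let ?F' = "frechet_derivative F (at (y + s *\<^sub>R u))"
  have d1: "((\<lambda>s. y + s *\<^sub>R u) has_derivative (\<lambda>h. h *\<^sub>R u)) (at s)"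
    by (auto intro!: derivative_eq_intros)
  have d2: "(F has_derivative ?F') (at (y + s *\<^sub>R u))"
    using assms frechet_derivative_works by blast
  have "((\<lambda>s. F (y + s *\<^sub>R u)) has_derivative (\<lambda>h. ?F' (h *\<^sub>R u))) (at s)"
    using has_derivative_compose[OF d1 d2] by (simp add: o_def)
  moreover have "linear ?F'" using d2 has_derivative_linear by blast
  then have "(\<lambda>h. ?F' (h *\<^sub>R u)) = (\<lambda>h. ?F' u * h)"
    by (auto simp: linear_scale)
  ultimately show ?thesis by (simp add: has_field_derivative_def)
qed




lemma mvt2d:
  fixes f :: "real^'n::finite \<Rightarrow> real"
  assumes h: "0 < h"
    and inV: "\<And>s t. 0 \<le> s \<Longrightarrow> s \<le> h \<Longrightarrow> 0 \<le> t \<Longrightarrow> t \<le> h \<Longrightarrow> x + s *\<^sub>R axis a 1 + t *\<^sub>R axis b 1 \<in> V"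
    and d0: "\<forall>y\<in>V. f differentiable (at y)"
    and d1: "\<forall>y\<in>V. pd a f differentiable (at y)"
  shows "\<exists>\<xi> \<eta>. 0 < \<xi> \<and> \<xi> < h \<and> 0 < \<eta> \<and> \<eta> < h \<and>
     f (x + h *\<^sub>R axis a 1 + h *\<^sub>R axis b 1) - f (x + h *\<^sub>R axis a 1) - f (x + h *\<^sub>R axis b 1) + f x
       = h * h * pd b (pd a f) (x + \<xi> *\<^sub>R axis a 1 + \<eta> *\<^sub>R axis b 1)"
proof -
  define u where "u = (axis a 1 :: real^'n)"
  define v where "v = (axis b 1 :: real^'n)"
  have inV': "\<And>s t. 0 \<le> s \<Longrightarrow> s \<le> h \<Longrightarrow> 0 \<le> t \<Longrightarrow> t \<le> h \<Longrightarrow> x + s *\<^sub>R u + t *\<^sub>R v \<in> V"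
    using inV unfolding u_def v_def by blast
  define \<phi> where "\<phi> s = f ((x + h *\<^sub>R v) + s *\<^sub>R u) - f (x + s *\<^sub>R u)" for s
  have D1: "DERIV \<phi> s :> pd a f ((x + h *\<^sub>R v) + s *\<^sub>R u) - pd a f (x + s *\<^sub>R u)"
    if "0 \<le> s" "s \<le> h" for s
  proof -
    have m1: "(x + h *\<^sub>R v) + s *\<^sub>R u \<in> V" using inV'[of s h] that h by (simp add: add_ac)
    have m2: "x + s *\<^sub>R u \<in> V" using inV'[of s 0] that h by simp
    have e1: "DERIV (\<lambda>s. f ((x + h *\<^sub>R v) + s *\<^sub>R u)) s :> pd a f ((x + h *\<^sub>R v) + s *\<^sub>R u)"
      unfolding pd_def u_def by (rule dir_deriv) (use m1 d0 u_def in blast)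
    have e2: "DERIV (\<lambda>s. f (x + s *\<^sub>R u)) s :> pd a f (x + s *\<^sub>R u)"
      unfolding pd_def u_def by (rule dir_deriv) (use m2 d0 u_def in blast)
    show ?thesis unfolding \<phi>_def by (rule DERIV_diff[OF e1 e2])
  qed
  have "\<exists>z. 0 < z \<and> z < h \<and> \<phi> h - \<phi> 0 = (h - 0) * (\<lambda>s. pd a f ((x + h *\<^sub>R v) + s *\<^sub>R u) - pd a f (x + s *\<^sub>R u)) z"
    by (rule MVT2[OF h]) (rule D1)
  then obtain \<xi> where xi: "0 < \<xi>" "\<xi> < h"
    "\<phi> h - \<phi> 0 = (h - 0) * (pd a f ((x + h *\<^sub>R v) + \<xi> *\<^sub>R u) - pd a f (x + \<xi> *\<^sub>R u))"
    by blast
  define \<omega> where "\<omega> t = pd a f ((x + \<xi> *\<^sub>R u) + t *\<^sub>R v)" for t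
  have D2: "DERIV \<omega> t :> pd b (pd a f) ((x + \<xi> *\<^sub>R u) + t *\<^sub>R v)" if "0 \<le> t" "t \<le> h" for t
  proof -
    have m1: "(x + \<xi> *\<^sub>R u) + t *\<^sub>R v \<in> V" using inV'[of \<xi> t] that xi by simp
    show ?thesis unfolding \<omega>_def pd_def[of b] v_def
      by (rule dir_deriv) (use m1 d1 v_def in blast)
  qed
  have "\<exists>z. 0 < z \<and> z < h \<and> \<omega> h - \<omega> 0 = (h - 0) * (\<lambda>t. pd b (pd a f) ((x + \<xi> *\<^sub>R u) + t *\<^sub>R v)) z"
    by (rule MVT2[OF h]) (rule D2)
  then obtain \<eta> where eta: "0 < \<eta>" "\<eta> < h"
    "\<omega> h - \<omega> 0 = (h - 0) * pd b (pd a f) ((x + \<xi> *\<^sub>R u) + \<eta> *\<^sub>R v)"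
    by blast
  have "f (x + h *\<^sub>R u + h *\<^sub>R v) - f (x + h *\<^sub>R u) - f (x + h *\<^sub>R v) + f x = \<phi> h - \<phi> 0"
    unfolding \<phi>_def by (simp add: add_ac)
  also have "\<dots> = h * (\<omega> h - \<omega> 0)" using xi(3) unfolding \<omega>_def by (simp add: add_ac)
  also have "\<dots> = h * h * pd b (pd a f) (x + \<xi> *\<^sub>R u + \<eta> *\<^sub>R v)" using eta(3) by simp
  finally have "f (x + h *\<^sub>R u + h *\<^sub>R v) - f (x + h *\<^sub>R u) - f (x + h *\<^sub>R v) + f x = h * h * pd b (pd a f) (x + \<xi> *\<^sub>R u + \<eta> *\<^sub>R v)" .
  then show ?thesis using xi(1,2) eta(1,2) unfolding u_def v_def by blast
qed




lemma abs_contra: "\<bar>A - X\<bar> < \<bar>X - Y\<bar> / 2 \<Longrightarrow> \<bar>A - Y\<bar> < \<bar>X - Y\<bar> / 2 \<Longrightarrow> False"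
  for A X Y :: real by (simp add: abs_if split: if_splits)

lemma clairaut:
  fixes f :: "real^'n::finite \<Rightarrow> real"
  assumes V: "open V" "x \<in> V"
   and d0: "\<forall>y\<in>V. f differentiable (at y)"
   and d1: "\<forall>i. \<forall>y\<in>V. pd i f differentiable (at y)"
   and c2: "\<forall>i j. isCont (pd j (pd i f)) x"
  shows "pd b (pd a f) x = pd a (pd b f) x"
proof (rule ccontr)
  assume ne: "pd b (pd a f) x \<noteq> pd a (pd b f) x"
  define c where "c = \<bar>pd b (pd a f) x - pd a (pd b f) x\<bar>"
  have c: "c > 0" using ne unfolding c_def by simp
  obtain r where r: "r > 0" "ball x r \<subseteq> V" using V open_contains_ball by blast
  have c2': "c/2 > 0" using c by simp
  have "isCont (pd b (pd a f)) x" using c2 by blast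
  then have "\<forall>e>0. \<exists>d>0. \<forall>y. dist y x < d \<longrightarrow> dist (pd b (pd a f) y) (pd b (pd a f) x) < e"
    unfolding continuous_at_eps_delta .
  then obtain d1 where d1p: "d1 > 0" and d1c: "\<forall>y. dist y x < d1 \<longrightarrow> dist (pd b (pd a f) y) (pd b (pd a f) x) < c/2"
    using c2' by blast
  have "isCont (pd a (pd b f)) x" using c2 by blast
  then have "\<forall>e>0. \<exists>d>0. \<forall>y. dist y x < d \<longrightarrow> dist (pd a (pd b f) y) (pd a (pd b f) x) < e"
    unfolding continuous_at_eps_delta .
  then obtain d2 where d2p: "d2 > 0" and d2c: "\<forall>y. dist y x < d2 \<longrightarrow> dist (pd a (pd b f) y) (pd a (pd b f) x) < c/2"
    using c2' by blast
  define h where "h = min r (min d1 d2) / 4"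
  have h: "h > 0" using r d1p d2p by (simp add: h_def)
  have close: "dist (x + s *\<^sub>R axis i 1 + t *\<^sub>R axis j 1) x < min r (min d1 d2)"
    if "0 \<le> s" "s \<le> h" "0 \<le> t" "t \<le> h" for s t i j
  proof -
    have "dist (x + s *\<^sub>R axis i 1 + t *\<^sub>R axis j 1) x = norm (s *\<^sub>R axis i (1::real) + t *\<^sub>R (axis j 1 :: real^'n))"
      by (simp add: dist_norm)
    also have "\<dots> \<le> norm (s *\<^sub>R axis i (1::real) :: real^'n) + norm (t *\<^sub>R (axis j 1 :: real^'n))"
      by (rule norm_triangle_ineq)
    also have "\<dots> = s + t" using that by simp
    also have "\<dots> < min r (min d1 d2)" using that h unfolding h_def by linarith
    finally show ?thesis .
  qed
  have inV: "x + s *\<^sub>R axis i 1 + t *\<^sub>R axis j 1 \<in> V"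
    if "0 \<le> s" "s \<le> h" "0 \<le> t" "t \<le> h" for s t i j
    using close[OF that, of i j] r by (auto simp: dist_commute)
  obtain \<xi> \<eta> where p: "0 < \<xi>" "\<xi> < h" "0 < \<eta>" "\<eta> < h"
    "f (x + h *\<^sub>R axis a 1 + h *\<^sub>R axis b 1) - f (x + h *\<^sub>R axis a 1) - f (x + h *\<^sub>R axis b 1) + f x
       = h * h * pd b (pd a f) (x + \<xi> *\<^sub>R axis a 1 + \<eta> *\<^sub>R axis b 1)"
    using mvt2d[OF h inV d0, of a b] d1 by blast
  obtain \<xi>' \<eta>' where q: "0 < \<xi>'" "\<xi>' < h" "0 < \<eta>'" "\<eta>' < h"
    "f (x + h *\<^sub>R axis b 1 + h *\<^sub>R axis a 1) - f (x + h *\<^sub>R axis b 1) - f (x + h *\<^sub>R axis a 1) + f x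
       = h * h * pd a (pd b f) (x + \<xi>' *\<^sub>R axis b 1 + \<eta>' *\<^sub>R axis a 1)"
    using mvt2d[OF h inV d0, of b a] d1 by blast
  have "h * h * pd b (pd a f) (x + \<xi> *\<^sub>R axis a 1 + \<eta> *\<^sub>R axis b 1)
      = h * h * pd a (pd b f) (x + \<xi>' *\<^sub>R axis b 1 + \<eta>' *\<^sub>R axis a 1)"
  proof -
    have sw: "x + h *\<^sub>R axis b 1 + h *\<^sub>R axis a 1 = x + h *\<^sub>R axis a 1 + h *\<^sub>R (axis b 1 :: real^'n)"
      by (simp add: add_ac)
    show ?thesis using p(5) q(5)[unfolded sw] by linarith
  qed
  then have eq: "pd b (pd a f) (x + \<xi> *\<^sub>R axis a 1 + \<eta> *\<^sub>R axis b 1)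
      = pd a (pd b f) (x + \<xi>' *\<^sub>R axis b 1 + \<eta>' *\<^sub>R axis a 1)" using h by simp
  have "dist (x + \<xi> *\<^sub>R axis a 1 + \<eta> *\<^sub>R axis b 1) x < d1"
    using close[of \<xi> \<eta> a b] p by simp
  then have e1: "dist (pd b (pd a f) (x + \<xi> *\<^sub>R axis a 1 + \<eta> *\<^sub>R axis b 1)) (pd b (pd a f) x) < c/2"
    using d1c by blast
  have "dist (x + \<xi>' *\<^sub>R axis b 1 + \<eta>' *\<^sub>R axis a 1) x < d2"
    using close[of \<xi>' \<eta>' b a] q by simp
  then have e2: "dist (pd a (pd b f) (x + \<xi>' *\<^sub>R axis b 1 + \<eta>' *\<^sub>R axis a 1)) (pd a (pd b f) x) < c/2"
    using d2c by blast
  from e1 e2 eq show False unfolding c_def dist_real_def using abs_contra by metis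
qed




lemma matrix_inv_both:
  fixes A :: "real^'n::finite^'n"
  assumes "invertible A"
  shows "A ** matrix_inv A = mat 1 \<and> matrix_inv A ** A = mat 1"
  using assms unfolding matrix_inv_def invertible_def by (rule someI_ex)

lemma lor_det:
  fixes g :: "real^'n::finite \<Rightarrow> real^'n^'n"
  assumes "lorentzian_at g x" shows "det (g x) \<noteq> 0"
proof -
  obtain P :: "real^'n^'n" and i0 where P: "invertible P"
    "transpose P ** g x ** P = (\<chi> i j. if i = j then (if i = i0 then -1 else 1) else 0)"
    using assms unfolding lorentzian_at_def by blast
  define D :: "real^'n^'n" where "D = (\<chi> i j. if i = j then (if i = i0 then -1 else 1) else 0)"
  have "det D = (\<Prod>i\<in>UNIV. D $ i $ i)" by (rule det_diagonal) (simp add: D_def)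
  also have "\<dots> \<noteq> 0" by (simp add: D_def)
  finally have "det D \<noteq> 0" .
  then have "det (transpose P ** g x ** P) \<noteq> 0" using P(2) D_def by simp
  then show ?thesis by (simp add: det_mul)
qed

lemma mv_axis: "((M::real^'n::finite^'n) *v axis c 1) $ i = M $ i $ c"
  by (simp add: matrix_vector_mult_def axis_def if_distrib cong: if_cong)

lemma matrix_inv_cramer:
  fixes A :: "real^'n::finite^'n"
  assumes d: "det A \<noteq> 0"
  shows "matrix_inv A $ i $ c = det (\<chi> r s. if s = i then (if r = c then 1 else 0) else A $ r $ s) / det A"
proof -
  have ax: "\<And>r. (axis c 1 :: real^'n) $ r = (if r = c then 1 else 0)" by (simp add: axis_def)
  have inv: "invertible A" using d invertible_det_nz by blast
  have "A *v (matrix_inv A *v axis c 1) = axis c 1"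
    using matrix_inv_both[OF inv] by (simp add: matrix_vector_mul_assoc)
  then have "matrix_inv A *v axis c 1 = (\<chi> k. det (\<chi> i j. if j = k then axis c 1 $ i else A $ i $ j) / det A)"
    using cramer[OF d] by blast
  then have "(matrix_inv A *v axis c 1) $ i = det (\<chi> r s. if s = i then axis c 1 $ r else A $ r $ s) / det A"
    by simp
  then show ?thesis unfolding mv_axis ax .
qed

lemma det_differentiable:
  fixes F :: "real^'m::finite \<Rightarrow> real^'n::finite^'n"
  assumes "\<And>r s. (\<lambda>y. F y $ r $ s) differentiable (at x)"
  shows "(\<lambda>y. det (F y)) differentiable (at x)"
  unfolding det_def
  by (intro differentiable_sum differentiable_mult differentiable_const differentiable_prod_at ballI)
     (auto simp: finite_permutations assms)




lemma ginv_diff: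
  fixes g :: "real^'n::finite \<Rightarrow> real^'n^'n"
  assumes U: "open U" "x \<in> U" and gs: "\<forall>a b. smooth_on U (\<lambda>y. g y $ a $ b)"
    and dt: "\<forall>y\<in>U. det (g y) \<noteq> 0"
  shows "(\<lambda>y. ginv g y $ i $ c) differentiable (at x)"
proof -
  define h where "h y = det (\<chi> r s. if s = i then (if r = c then 1 else 0) else g y $ r $ s) / det (g y)" for y
  have gd: "(\<lambda>y. g y $ r $ s) differentiable (at x)" for r s
    using smooth_diff[OF U] gs by blast
  have "(\<lambda>y. (\<chi> r s. if s = i then (if r = c then 1 else 0) else g y $ r $ s) $ r $ s) differentiable (at x)" for r s
    using gd[of r s] by (cases "s = i") auto
  then have hd: "h differentiable (at x)" unfolding h_def
    using det_differentiable[of "\<lambda>y. \<chi> r s. if s = i then (if r = c then 1 else 0) else g y $ r $ s" x]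
      det_differentiable[of g x] gd dt U(2)
    by (intro differentiable_divide) auto
  obtain r where r: "r > 0" "ball x r \<subseteq> U" using U open_contains_ball by blast
  have eq: "h y = ginv g y $ i $ c" if "y \<in> U" for y
    unfolding h_def ginv_def using matrix_inv_cramer[of "g y" i c] dt that by simp
  have "(\<lambda>y. ginv g y $ i $ c) differentiable (at x within UNIV)"
    by (rule differentiable_transform_within[OF hd r(1)]) (use r eq in \<open>auto simp: dist_commute subset_iff\<close>)
  then show ?thesis by simp
qed

lemma finite_klists: "finite (klists k :: 'n::finite list set)"
proof -
  have "klists k = {xs :: 'n list. set xs \<subseteq> UNIV \<and> length xs = k}" by (simp add: klists_def)
  then show ?thesis using finite_lists_length_eq[of "UNIV :: 'n set" k] by simp
qed

lemma raise_diff: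
  fixes g :: "real^'n::finite \<Rightarrow> real^'n^'n"
  assumes gi: "\<And>i c. (\<lambda>y. ginv g y $ i $ c) differentiable (at x)"
    and Nd: "\<And>bs. (\<lambda>y. N y bs) differentiable (at x)"
  shows "(\<lambda>y. raise g N y as) differentiable (at x)"
  unfolding raise_def
  by (intro differentiable_sum differentiable_mult differentiable_prod_at ballI)
     (auto simp: finite_klists gi Nd)




lemma sum_fiber_zero:
  fixes H :: "'n::finite list \<Rightarrow> real"
  assumes p: "p < k"
    and z: "\<And>y. length y = k \<Longrightarrow> (\<Sum>c\<in>UNIV. H (y[p := c])) = 0"
  shows "(\<Sum>bs\<in>klists k. H bs) = 0"
proof -
  define c0 :: 'n where "c0 = undefined"
  define S where "S = (klists k :: 'n list set)"
  have fin: "finite S" unfolding S_def by (rule finite_klists)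
  have "(\<Sum>bs\<in>S. H bs) = (\<Sum>y\<in>(\<lambda>bs. bs[p:=c0]) ` S. \<Sum>bs\<in>{x. x \<in> S \<and> x[p:=c0] = y}. H bs)"
    by (rule sum.image_gen[OF fin])
  also have "\<dots> = (\<Sum>y\<in>(\<lambda>bs. bs[p:=c0]) ` S. 0)"
  proof (rule sum.cong[OF refl])
    fix y assume "y \<in> (\<lambda>bs. bs[p:=c0]) ` S"
    then obtain b0 where b0: "b0 \<in> S" "y = b0[p:=c0]" by blast
    have ly: "length y = k" using b0 by (simp add: S_def klists_def)
    have yp: "y ! p = c0" using b0 p by (simp add: S_def klists_def)
    have fib: "{x. x \<in> S \<and> x[p:=c0] = y} = (\<lambda>c. y[p:=c]) ` UNIV"
    proof (intro set_eqI iffI)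
      fix x assume "x \<in> {x. x \<in> S \<and> x[p:=c0] = y}"
      then have x: "x \<in> S" "x[p:=c0] = y" by auto
      have "x = y[p := x ! p]" using x(2)[symmetric] by simp
      then show "x \<in> (\<lambda>c. y[p:=c]) ` UNIV" by blast
    next
      fix x assume "x \<in> (\<lambda>c. y[p:=c]) ` UNIV"
      then obtain c where "x = y[p:=c]" by blast
      moreover have yid: "y[p:=c0] = y" using yp list_update_id by metis
      ultimately show "x \<in> {x. x \<in> S \<and> x[p:=c0] = y}"
        using ly by (simp add: S_def klists_def)
    qed
    have inj: "inj (\<lambda>c. y[p:=c])"
      by (rule injI) (metis ly p nth_list_update_eq)
    show "(\<Sum>bs\<in>{x. x \<in> S \<and> x[p:=c0] = y}. H bs) = 0"
      unfolding fib sum.reindex[OF inj] using z[OF ly] by (simp add: o_def)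
  qed
  finally show ?thesis by (simp add: S_def)
qed

lemma raise_contr:
  fixes G :: "real^'n::finite^'n" and T :: "'n list \<Rightarrow> real" and w :: "real^'n"
  assumes p: "p < k" and las: "length as = k"
   and h: "\<forall>cs. length cs = k \<longrightarrow> (\<Sum>c\<in>UNIV. (\<Sum>b\<in>UNIV. w$b * G$b$c) * T (cs[p:=c])) = 0"
  shows "(\<Sum>b\<in>UNIV. w$b * (\<Sum>bs\<in>klists k. (\<Prod>j<k. G $ (as[p:=b] ! j) $ (bs ! j)) * T bs)) = 0"
proof -
  define Q where "Q bs = (\<Prod>j\<in>{..<k}-{p}. G $ (as ! j) $ (bs ! j))" for bs
  define t where "t c = (\<Sum>b\<in>UNIV. w$b * G$b$c)" for c
  have pr: "(\<Prod>j<k. G $ (as[p:=b] ! j) $ (bs ! j)) = G $ b $ (bs ! p) * Q bs" for b bs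
  proof -
    have "(\<Prod>j<k. G $ (as[p:=b] ! j) $ (bs ! j)) = G $ (as[p:=b] ! p) $ (bs ! p) * (\<Prod>j\<in>{..<k}-{p}. G $ (as[p:=b] ! j) $ (bs ! j))"
      using p by (subst prod.remove[of _ p]) auto
    also have "(\<Prod>j\<in>{..<k}-{p}. G $ (as[p:=b] ! j) $ (bs ! j)) = Q bs"
      unfolding Q_def by (rule prod.cong) auto
    finally show ?thesis using p las by simp
  qed
  have "(\<Sum>b\<in>UNIV. w$b * (\<Sum>bs\<in>klists k. (\<Prod>j<k. G $ (as[p:=b] ! j) $ (bs ! j)) * T bs))
      = (\<Sum>b\<in>UNIV. \<Sum>bs\<in>klists k. w$b * (G $ b $ (bs ! p) * Q bs * T bs))"
    by (simp add: pr sum_distrib_left mult.assoc)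
  also have "\<dots> = (\<Sum>bs\<in>klists k. \<Sum>b\<in>UNIV. w$b * (G $ b $ (bs ! p) * Q bs * T bs))"
    by (rule sum.swap)
  also have "\<dots> = (\<Sum>bs\<in>klists k. t (bs ! p) * Q bs * T bs)"
    unfolding t_def by (simp add: sum_distrib_right mult.assoc)
  also have "\<dots> = 0"
  proof (rule sum_fiber_zero[OF p])
    fix y :: "'n list" assume ly: "length y = k"
    have Qy: "Q (y[p:=c]) = Q y" for c unfolding Q_def by (rule prod.cong) auto
    have "(\<Sum>c\<in>UNIV. t (y[p:=c] ! p) * Q (y[p:=c]) * T (y[p:=c])) = Q y * (\<Sum>c\<in>UNIV. t c * T (y[p:=c]))"
      using ly p by (simp add: Qy sum_distrib_left mult_ac)
    also have "\<dots> = 0" using h ly unfolding t_def by simp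
    finally show "(\<Sum>c\<in>UNIV. t (y[p:=c] ! p) * Q (y[p:=c]) * T (y[p:=c])) = 0" .
  qed
  finally show ?thesis .
qed

definition swp :: "nat \<Rightarrow> nat \<Rightarrow> nat \<Rightarrow> nat" where
  "swp i j m = (if m = i then j else if m = j then i else m)"

lemma swap_nth:
  assumes "i < length l" "j < length l" "m < length l" "i \<noteq> j"
  shows "l[i := l!j, j := l!i] ! m = l ! swp i j m"
  using assms by (auto simp: swp_def nth_list_update)

lemma raise_swap:
  fixes G :: "real^'n::finite^'n" and T :: "'n list \<Rightarrow> real"
  assumes ij: "i < j" "j < k" and las: "length as = k"
   and h: "\<forall>cs. length cs = k \<longrightarrow> T (cs[i := cs!j, j := cs!i]) = - T cs"
  shows "(\<Sum>bs\<in>klists k. (\<Prod>m<k. G $ (as[i:=as!j, j:=as!i] ! m) $ (bs ! m)) * T bs)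
       = - (\<Sum>bs\<in>klists k. (\<Prod>m<k. G $ (as ! m) $ (bs ! m)) * T bs)"
proof -
  define sw :: "'n list \<Rightarrow> 'n list" where "sw l = l[i := l!j, j := l!i]" for l
  have swsw: "sw (sw l) = l" if "length l = k" for l
    using that ij unfolding sw_def by (auto simp: list_eq_iff_nth_eq nth_list_update)
  have swsw': "sw (sw l) = l" if "l \<in> klists k" for l
    using swsw that by (simp add: klists_def)
  have swk: "sw l \<in> klists k" if "l \<in> klists k" for l
    using that unfolding sw_def klists_def by simp
  have "(\<Sum>bs\<in>klists k. (\<Prod>m<k. G $ (as[i:=as!j, j:=as!i] ! m) $ (bs ! m)) * T bs)
      = (\<Sum>bs\<in>klists k. (\<Prod>m<k. G $ (as[i:=as!j, j:=as!i] ! m) $ (sw bs ! m)) * T (sw bs))"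
    by (rule sum.reindex_bij_witness[of _ sw sw]) (auto simp: swsw' swk)
  also have "\<dots> = (\<Sum>bs\<in>klists k. - ((\<Prod>m<k. G $ (as ! m) $ (bs ! m)) * T bs))"
  proof (rule sum.cong[OF refl])
    fix bs :: "'n list" assume bs: "bs \<in> klists k"
    then have lb: "length bs = k" by (simp add: klists_def)
    have "(\<Prod>m<k. G $ (as[i:=as!j, j:=as!i] ! m) $ (sw bs ! m)) = (\<Prod>m<k. G $ (as ! swp i j m) $ (bs ! swp i j m))"
      by (rule prod.cong[OF refl]) (use ij las lb in \<open>simp add: sw_def swap_nth\<close>)
    also have "\<dots> = (\<Prod>m<k. G $ (as ! m) $ (bs ! m))"
      by (rule prod.reindex_bij_witness[of _ "swp i j" "swp i j"]) (use ij in \<open>auto simp: swp_def\<close>)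
    finally show "(\<Prod>m<k. G $ (as[i:=as!j, j:=as!i] ! m) $ (sw bs ! m)) * T (sw bs) = - ((\<Prod>m<k. G $ (as ! m) $ (bs ! m)) * T bs)"
      using h lb unfolding sw_def by simp
  qed
  finally show ?thesis by (simp add: sum_negf)
qed




lemma sym_anti_zero:
  fixes H X :: "'a::finite \<Rightarrow> 'a \<Rightarrow> real"
  assumes "\<And>a b. H a b = H b a" "\<And>a b. X a b = - X b a"
  shows "(\<Sum>a\<in>UNIV. \<Sum>b\<in>UNIV. H a b * X a b) = 0"
proof -
  have hx: "H a b * X a b = - (H b a * X b a)" for a b
    using assms(1)[of a b] assms(2)[of a b] by (metis mult_minus_right)
  have "(\<Sum>a\<in>UNIV. \<Sum>b\<in>UNIV. H a b * X a b) = (\<Sum>a\<in>UNIV. \<Sum>b\<in>UNIV. - (H b a * X b a))"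
    by (intro sum.cong refl hx)
  also have "\<dots> = - (\<Sum>a\<in>UNIV. \<Sum>b\<in>UNIV. H b a * X b a)" by (simp add: sum_negf)
  also have "(\<Sum>a\<in>UNIV. \<Sum>b\<in>UNIV. H b a * X b a) = (\<Sum>b\<in>UNIV. \<Sum>a\<in>UNIV. H b a * X b a)"
    by (rule sum.swap)
  finally show ?thesis by linarith
qed

lemma swap3:
  fixes w :: "'b \<Rightarrow> real"
  shows "(\<Sum>b\<in>B. w b * (\<Sum>a\<in>A. \<Sum>m\<in>Ms. \<Sum>e\<in>E. F b a m e))
       = (\<Sum>m\<in>Ms. \<Sum>b\<in>B. w b * (\<Sum>a\<in>A. \<Sum>e\<in>E. F b a m e))"
proof -
  have "(\<Sum>b\<in>B. w b * (\<Sum>a\<in>A. \<Sum>m\<in>Ms. \<Sum>e\<in>E. F b a m e))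
      = (\<Sum>b\<in>B. \<Sum>a\<in>A. \<Sum>m\<in>Ms. w b * (\<Sum>e\<in>E. F b a m e))"
    by (simp add: sum_distrib_left)
  also have "\<dots> = (\<Sum>b\<in>B. \<Sum>m\<in>Ms. \<Sum>a\<in>A. w b * (\<Sum>e\<in>E. F b a m e))"
    by (rule sum.cong[OF refl], rule sum.swap)
  also have "\<dots> = (\<Sum>m\<in>Ms. \<Sum>b\<in>B. \<Sum>a\<in>A. w b * (\<Sum>e\<in>E. F b a m e))"
    by (rule sum.swap)
  also have "\<dots> = (\<Sum>m\<in>Ms. \<Sum>b\<in>B. w b * (\<Sum>a\<in>A. \<Sum>e\<in>E. F b a m e))"
    by (simp add: sum_distrib_left)
  finally show ?thesis .
qed

lemma swap3b:
  fixes w :: "'b \<Rightarrow> real"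
  shows "(\<Sum>b\<in>B. w b * (\<Sum>a\<in>A. \<Sum>e\<in>E. G a e * Y a e b))
       = (\<Sum>a\<in>A. \<Sum>e\<in>E. G a e * (\<Sum>b\<in>B. w b * Y a e b))"
proof -
  have "(\<Sum>b\<in>B. w b * (\<Sum>a\<in>A. \<Sum>e\<in>E. G a e * Y a e b))
      = (\<Sum>b\<in>B. \<Sum>a\<in>A. \<Sum>e\<in>E. G a e * (w b * Y a e b))"
    by (simp add: sum_distrib_left mult_ac)
  also have "\<dots> = (\<Sum>a\<in>A. \<Sum>b\<in>B. \<Sum>e\<in>E. G a e * (w b * Y a e b))"
    by (rule sum.swap)
  also have "\<dots> = (\<Sum>a\<in>A. \<Sum>e\<in>E. \<Sum>b\<in>B. G a e * (w b * Y a e b))"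
    by (rule sum.cong[OF refl], rule sum.swap)
  also have "\<dots> = (\<Sum>a\<in>A. \<Sum>e\<in>E. G a e * (\<Sum>b\<in>B. w b * Y a e b))"
    by (simp add: sum_distrib_left)
  finally show ?thesis .
qed

lemma main_ident:
  fixes M :: "real^'n::finite \<Rightarrow> 'n list \<Rightarrow> real" and \<psi> :: "real^'n \<Rightarrow> real"
    and g :: "real^'n \<Rightarrow> real^'n^'n"
  assumes V: "open V" "x \<in> V"
   and psi: "smooth_on V \<psi>"
   and Md: "\<forall>as. (\<lambda>y. M y as) differentiable (at x)"
   and contr: "\<forall>y\<in>V. \<forall>cs p. length cs = k \<and> p < k \<longrightarrow> (\<Sum>b\<in>UNIV. grad \<psi> y $ b * M y (cs[p:=b])) = 0"
   and anti: "\<forall>a b. M x (a # bs[j:=b]) = - M x (b # bs[j:=a])"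
   and Gsym: "\<forall>a b c. christoffel g x a b c = christoffel g x a c b"
   and lb: "length bs = k - 1" "j < k - 1"
  shows "(\<Sum>b\<in>UNIV. grad \<psi> x $ b * cov_div g M x (bs[j:=b])) = 0"
proof -
  have hk: "Suc (k - 1) = k" using lb by arith
  have jk: "Suc j < k" using lb by arith
  have gr: "grad \<psi> y $ b = pd b \<psi> y" for y b by (simp add: grad_def)
  have cd: "cov_div g M x (bs[j:=b]) = (\<Sum>a\<in>UNIV. pd a (\<lambda>y. M y (a # bs[j:=b])) x)
      + (\<Sum>a\<in>UNIV. \<Sum>m<k. \<Sum>e\<in>UNIV. christoffel g x ((a # bs[j:=b]) ! m) a e * M x ((a # bs[j:=b])[m := e]))" for b
    unfolding cov_div_def using lb hk by (simp add: sum.distrib)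
  have psid: "\<forall>y\<in>V. \<psi> differentiable (at y)" using smooth_diff[OF V(1) _ psi] by blast
  have psi1: "\<forall>i. \<forall>y\<in>V. pd i \<psi> differentiable (at y)" using smooth_diff[OF V(1) _ smooth_pd[OF psi]] by blast
  have psi2: "\<forall>i j. isCont (pd j (pd i \<psi>)) x" using smooth_cont[OF V smooth_pd[OF smooth_pd[OF psi]]] by blast
  have Aa: "(\<Sum>b\<in>UNIV. pd b \<psi> x * pd a (\<lambda>y. M y (a # bs[j:=b])) x)
      = - (\<Sum>b\<in>UNIV. pd a (pd b \<psi>) x * M x (a # bs[j:=b]))" for a
  proof -
    define F where "F y = (\<Sum>b\<in>UNIV. pd b \<psi> y * M y (a # bs[j:=b]))" for y
    have "F y = 0" if "y \<in> V" for y
    proof -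
      have "length (a # bs) = k" using lb hk by simp
      then have "(\<Sum>b\<in>UNIV. grad \<psi> y $ b * M y ((a # bs)[Suc j := b])) = 0"
        using contr that jk by blast
      then show ?thesis unfolding F_def gr by simp
    qed
    then have z: "pd a F x = 0" using pd_local_zero[OF V] by blast
    have dd: "(\<lambda>y. pd b \<psi> y * M y (a # bs[j:=b])) differentiable (at x)" for b
      using psi1 V(2) Md by (intro differentiable_mult) auto
    have "pd a F x = (\<Sum>b\<in>UNIV. pd a (\<lambda>y. pd b \<psi> y * M y (a # bs[j:=b])) x)"
      unfolding F_def using pd_sum[of UNIV "\<lambda>b y. pd b \<psi> y * M y (a # bs[j:=b])" x a] dd by simp
    also have "\<dots> = (\<Sum>b\<in>UNIV. pd a (pd b \<psi>) x * M x (a # bs[j:=b]) + pd b \<psi> x * pd a (\<lambda>y. M y (a # bs[j:=b])) x)"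
      by (rule sum.cong[OF refl], rule pd_mult) (use psi1 V(2) Md in auto)
    finally show ?thesis using z by (simp add: sum.distrib)
  qed
  have partA: "(\<Sum>b\<in>UNIV. grad \<psi> x $ b * (\<Sum>a\<in>UNIV. pd a (\<lambda>y. M y (a # bs[j:=b])) x)) = 0"
  proof -
    have "(\<Sum>b\<in>UNIV. grad \<psi> x $ b * (\<Sum>a\<in>UNIV. pd a (\<lambda>y. M y (a # bs[j:=b])) x))
        = (\<Sum>b\<in>UNIV. \<Sum>a\<in>UNIV. pd b \<psi> x * pd a (\<lambda>y. M y (a # bs[j:=b])) x)"
      by (simp add: gr sum_distrib_left)
    also have "\<dots> = (\<Sum>a\<in>UNIV. \<Sum>b\<in>UNIV. pd b \<psi> x * pd a (\<lambda>y. M y (a # bs[j:=b])) x)"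
      by (rule sum.swap)
    also have "\<dots> = (\<Sum>a\<in>UNIV. - (\<Sum>b\<in>UNIV. pd a (pd b \<psi>) x * M x (a # bs[j:=b])))"
      using Aa by simp
    also have "\<dots> = - (\<Sum>a\<in>UNIV. \<Sum>b\<in>UNIV. pd a (pd b \<psi>) x * M x (a # bs[j:=b]))"
      by (simp add: sum_negf)
    also have "(\<Sum>a\<in>UNIV. \<Sum>b\<in>UNIV. pd a (pd b \<psi>) x * M x (a # bs[j:=b])) = 0"
    proof (rule sym_anti_zero)
      show "pd a (pd b \<psi>) x = pd b (pd a \<psi>) x" for a b
        by (rule clairaut[OF V psid psi1 psi2])
      show "M x (a # bs[j:=b]) = - M x (b # bs[j:=a])" for a b using anti by blast
    qed
    finally show ?thesis by simp
  qed
  have Cm: "(\<Sum>b\<in>UNIV. grad \<psi> x $ b * (\<Sum>a\<in>UNIV. \<Sum>e\<in>UNIV.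
        christoffel g x ((a # bs[j:=b]) ! m) a e * M x ((a # bs[j:=b])[m := e]))) = 0"
    if m: "m < k" for m
  proof (cases "m = Suc j")
    case True
    have "(\<Sum>a\<in>UNIV. \<Sum>e\<in>UNIV. christoffel g x ((a # bs[j:=b]) ! m) a e * M x ((a # bs[j:=b])[m := e])) = 0" for b
    proof -
      have "(\<Sum>a\<in>UNIV. \<Sum>e\<in>UNIV. christoffel g x ((a # bs[j:=b]) ! m) a e * M x ((a # bs[j:=b])[m := e]))
          = (\<Sum>a\<in>UNIV. \<Sum>e\<in>UNIV. christoffel g x b a e * M x (a # bs[j:=e]))"
        using True lb by simp
      also have "\<dots> = 0"
        by (rule sym_anti_zero) (use Gsym anti in blast)+
      finally show ?thesis .
    qed
    then show ?thesis by simp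
  next
    case False
    have e1: "(a # bs[j:=b]) ! m = (a # bs) ! m" for a b
      using False by (cases m) auto
    have e2: "(a # bs[j:=b])[m := e] = ((a # bs)[m := e])[Suc j := b]" for a b e
    proof -
      have "(a # bs[j:=b])[m := e] = ((a # bs)[Suc j := b])[m := e]" by simp
      also have "\<dots> = ((a # bs)[m := e])[Suc j := b]" using False by (rule list_update_swap[symmetric])
      finally show ?thesis .
    qed
    have "(\<Sum>b\<in>UNIV. grad \<psi> x $ b * (\<Sum>a\<in>UNIV. \<Sum>e\<in>UNIV.
        christoffel g x ((a # bs[j:=b]) ! m) a e * M x ((a # bs[j:=b])[m := e])))
      = (\<Sum>b\<in>UNIV. grad \<psi> x $ b * (\<Sum>a\<in>UNIV. \<Sum>e\<in>UNIV.
        christoffel g x ((a # bs) ! m) a e * M x (((a # bs)[m := e])[Suc j := b])))"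
      by (simp only: e1 e2)
    also have "\<dots> = (\<Sum>a\<in>UNIV. \<Sum>e\<in>UNIV. christoffel g x ((a # bs) ! m) a e *
        (\<Sum>b\<in>UNIV. grad \<psi> x $ b * M x (((a # bs)[m := e])[Suc j := b])))"
      by (rule swap3b)
    also have "\<dots> = 0"
    proof -
      have "(\<Sum>b\<in>UNIV. grad \<psi> x $ b * M x (((a # bs)[m := e])[Suc j := b])) = 0" for a e
      proof -
        have "length ((a # bs)[m := e]) = length (a # bs)" by (rule length_list_update)
        then have "length ((a # bs)[m := e]) = k" using lb hk by simp
        then show ?thesis using contr V(2) jk by blast
      qed
      then show ?thesis by simp
    qed
    finally show ?thesis .
  qed
  have partB: "(\<Sum>b\<in>UNIV. grad \<psi> x $ b * (\<Sum>a\<in>UNIV. \<Sum>m<k. \<Sum>e\<in>UNIV.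
        christoffel g x ((a # bs[j:=b]) ! m) a e * M x ((a # bs[j:=b])[m := e]))) = 0"
    unfolding swap3 using Cm by simp
  show ?thesis
    unfolding cd using partA partB by (simp add: distrib_left sum.distrib)
qed




lemma span_zero_prop:
  fixes D :: "'n::finite \<Rightarrow> real" and S :: "(real^'n) set"
  assumes "v \<in> span S" "\<And>w. w \<in> S \<Longrightarrow> (\<Sum>b\<in>UNIV. w $ b * D b) = 0"
  shows "(\<Sum>b\<in>UNIV. v $ b * D b) = 0"
proof -
  have sub: "subspace {w :: real^'n. (\<Sum>b\<in>UNIV. w $ b * D b) = 0}"
    unfolding subspace_def by (auto simp: algebra_simps sum.distrib sum_distrib_left[symmetric])
  show ?thesis using span_induct[OF assms(1), of "\<lambda>w. (\<Sum>b\<in>UNIV. w $ b * D b) = 0"] sub assms(2) by simp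
qed

lemma annih_in_span:
  fixes \<tau> :: "real^'n::finite" and W :: "(real^'n) set"
  assumes "\<And>z. (\<forall>w\<in>W. w \<bullet> z = 0) \<Longrightarrow> \<tau> \<bullet> z = 0"
  shows "\<tau> \<in> span W"
proof -
  obtain y z where y: "y \<in> span W" and z: "\<And>w. w \<in> span W \<Longrightarrow> orthogonal z w" and e: "\<tau> = y + z"
    using orthogonal_subspace_decomp_exists[of W \<tau>] by blast
  have "\<forall>w\<in>W. w \<bullet> z = 0" using z span_base unfolding orthogonal_def by (metis inner_commute)
  then have "\<tau> \<bullet> z = 0" by (rule assms)
  moreover have "y \<bullet> z = 0" using z[OF y] unfolding orthogonal_def by (simp add: inner_commute)
  ultimately have "z \<bullet> z = 0" using e by (simp add: inner_add_left)
  then have "z = 0" by simp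
  then show ?thesis using e y by simp
qed

lemma inner_mv: "(u::real^'n::finite) \<bullet> (A *v v) = (transpose A *v u) \<bullet> v"
  by (simp add: inner_vec_def matrix_vector_mult_def transpose_def sum_distrib_left sum_distrib_right mult_ac)
     (rule sum.swap)




lemma inner_tv: "(u::real^'n::finite) \<bullet> (\<chi> c. \<Sum>b\<in>UNIV. w$b * G$b$c) = w \<bullet> (G *v u)"
proof -
  have "u \<bullet> (\<chi> c. \<Sum>b\<in>UNIV. w$b * G$b$c) = (\<Sum>c\<in>UNIV. \<Sum>b\<in>UNIV. w$b * G$b$c * u$c)"
    by (simp add: inner_vec_def sum_distrib_left mult_ac)
  also have "\<dots> = (\<Sum>b\<in>UNIV. \<Sum>c\<in>UNIV. w$b * G$b$c * u$c)" by (rule sum.swap)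
  also have "\<dots> = w \<bullet> (G *v u)"
    by (simp add: inner_vec_def matrix_vector_mult_def sum_distrib_left mult_ac)
  finally show ?thesis .
qed

theorem lemma7:
  fixes g :: "real^'n::finite \<Rightarrow> real^'n^'n"
    and U :: "(real^'n) set"
    and k :: nat
    and \<Phi> :: "nat \<Rightarrow> real^'n \<Rightarrow> real"
    and N :: "real^'n \<Rightarrow> 'n list \<Rightarrow> real"
  assumes U_open: "open U"
    and g_smooth: "\<forall>a b. smooth_on U (\<lambda>x. g x $ a $ b)"
    and g_sym: "\<forall>x\<in>U. transpose (g x) = g x"
    and g_lor: "\<forall>x\<in>U. lorentzian_at g x"
    and k_pos: "1 \<le> k"
    and Phi_smooth: "\<forall>i<k. smooth_on U (\<Phi> i)"
    and Phi_subm: "\<forall>x\<in>U. lin_indep_fam (\<lambda>i. grad (\<Phi> i) x) k"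
    and non_null: "\<forall>x\<in>U. non_null_at g \<Phi> k x"
    and integrable: "normal_integrable g \<Phi> k U"
    and N_smooth: "\<forall>as. smooth_on U (\<lambda>x. N x as)"
    and N_antisym: "\<forall>x\<in>U. \<forall>as i j. length as = k \<and> i < j \<and> j < k \<longrightarrow>
                      N x (as[i := as ! j, j := as ! i]) = - N x as"
    and N_normal: "\<forall>x\<in>U. \<forall>t. tangent_vec \<Phi> k x t \<longrightarrow>
                      (\<forall>as j. length as = k \<and> j < k \<longrightarrow>
                         (\<Sum>a\<in>UNIV. t $ a * N x (as[j := a])) = 0)"
    and N_unit: "\<forall>x\<in>U. \<exists>s. normal_minus_signs g \<Phi> k x s \<and>
                      (\<Sum>as\<in>klists k. N x as * raise g N x as) = (-1) ^ s * fact k"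
  shows "\<forall>x\<in>U. \<forall>t. tangent_vec \<Phi> k x t \<longrightarrow>
           (\<forall>bs j. length bs = k - 1 \<and> j < k - 1 \<longrightarrow>
              (\<Sum>b\<in>UNIV. (g x *v t) $ b * cov_div g (raise g N) x (bs[j := b])) = 0)"
proof (intro ballI allI impI)
  fix x and t :: "real^'n" and bs :: "'n list" and j :: nat
  assume x: "x \<in> U" and tt: "tangent_vec \<Phi> k x t" and bj: "length bs = k - 1 \<and> j < k - 1"
  define M where "M = raise g N"
  have hk: "Suc (k - 1) = k" using bj by arith
  have jk: "Suc j < k" using bj by arith
  have dets: "\<forall>y\<in>U. det (g y) \<noteq> 0" using g_lor lor_det by blast
  have ginvd: "(\<lambda>z. ginv g z $ i $ c) differentiable (at y)" if "y \<in> U" for y i c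
    using ginv_diff[OF U_open that g_smooth dets] .
  have Nd: "(\<lambda>y. N y bs) differentiable (at x)" for bs
    using smooth_diff[OF U_open x] N_smooth by blast
  have Md: "\<forall>as. (\<lambda>y. M y as) differentiable (at x)"
    unfolding M_def by (intro allI raise_diff ginvd[OF x] Nd)
  have pe: "pd e (\<lambda>y. g y $ b $ c) x = pd e (\<lambda>y. g y $ c $ b) x" for e b c
  proof -
    have "g y $ b $ c = g y $ c $ b" if "y \<in> U" for y
    proof -
      have "transpose (g y) $ c $ b = g y $ c $ b" using g_sym that by simp
      then show ?thesis by (simp add: transpose_def)
    qed
    then show ?thesis unfolding pd_def
      using frechet_derivative_transform_within_open[OF _ U_open x, of "\<lambda>y. g y $ b $ c" "\<lambda>y. g y $ c $ b"]
        smooth_diff[OF U_open x] g_smooth by metis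
  qed
  have Gsym: "\<forall>a b c. christoffel g x a b c = christoffel g x a c b"
  proof (intro allI)
    fix a b c
    have "christoffel g x a b c = (1/2) * (\<Sum>e\<in>UNIV. ginv g x $ a $ e *
      (pd b (\<lambda>y. g y $ e $ c) x + pd c (\<lambda>y. g y $ e $ b) x - pd e (\<lambda>y. g y $ b $ c) x))"
      by (simp add: christoffel_def)
    also have "\<dots> = (1/2) * (\<Sum>e\<in>UNIV. ginv g x $ a $ e *
      (pd c (\<lambda>y. g y $ e $ b) x + pd b (\<lambda>y. g y $ e $ c) x - pd e (\<lambda>y. g y $ c $ b) x))"
      using pe[of _ b c] by (simp add: add.commute)
    also have "\<dots> = christoffel g x a c b" by (simp add: christoffel_def)
    finally show "christoffel g x a b c = christoffel g x a c b" .
  qed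
  have anti: "\<forall>a b. M x (a # bs[j:=b]) = - M x (b # bs[j:=a])"
  proof (intro allI)
    fix a b
    let ?as = "a # bs[j:=b]"
    have las: "length ?as = k" using bj hk by simp
    have sw: "?as[0 := ?as ! Suc j, Suc j := ?as ! 0] = b # bs[j:=a]" using bj by simp
    have h: "\<forall>cs. length cs = k \<longrightarrow> N x (cs[0 := cs!Suc j, Suc j := cs!0]) = - N x cs"
      using N_antisym x jk by blast
    have "raise g N x (?as[0 := ?as ! Suc j, Suc j := ?as ! 0]) = - raise g N x ?as"
      unfolding raise_def length_list_update las by (rule raise_swap) (use jk las h in auto)
    then show "M x (a # bs[j:=b]) = - M x (b # bs[j:=a])" unfolding sw M_def by simp
  qed
  obtain V and \<psi> :: "nat \<Rightarrow> real^'n \<Rightarrow> real" where V: "open V" "x \<in> V" "V \<subseteq> U"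
    and psis: "\<forall>j < CARD('n) - k. smooth_on V (\<psi> j)"
    and Vp: "\<forall>y\<in>V. lin_indep_fam (\<lambda>j. grad (\<psi> j) y) (CARD('n) - k) \<and>
         {v. \<forall>j < CARD('n) - k. grad (\<psi> j) y \<bullet> v = 0} = normal_space g \<Phi> k y"
    using integrable[unfolded normal_integrable_def, rule_format, OF x] by (elim exE conjE) (rule that)
  have contr: "\<forall>y\<in>V. \<forall>cs p. length cs = k \<and> p < k \<longrightarrow> (\<Sum>b\<in>UNIV. grad (\<psi> i) y $ b * M y (cs[p:=b])) = 0"
    if i: "i < CARD('n) - k" for i
  proof (intro ballI allI impI)
    fix y and cs :: "'n list" and p assume y: "y \<in> V" and cp: "length cs = k \<and> p < k"
    have yU: "y \<in> U" using V y by blast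
    define w where "w = grad (\<psi> i) y"
    define G where "G = ginv g y"
    define tv :: "real^'n" where "tv = (\<chi> c. \<Sum>b\<in>UNIV. w$b * G$b$c)"
    have tan: "tangent_vec \<Phi> k y tv"
      unfolding tangent_vec_def
    proof (intro allI impI)
      fix l assume l: "l < k"
      have "G *v grad (\<Phi> l) y \<in> normal_space g \<Phi> k y" unfolding normal_space_def G_def
        using l by (intro span_base) auto
      then have "w \<bullet> (G *v grad (\<Phi> l) y) = 0" using Vp y i unfolding w_def by blast
      then show "grad (\<Phi> l) y \<bullet> tv = 0" unfolding tv_def inner_tv .
    qed
    have h0: "\<forall>as j. length as = k \<and> j < k \<longrightarrow> (\<Sum>a\<in>UNIV. tv $ a * N y (as[j:=a])) = 0"
      using N_normal yU tan by blast
    have h: "\<forall>cs. length cs = k \<longrightarrow> (\<Sum>c\<in>UNIV. (\<Sum>b\<in>UNIV. w$b * G$b$c) * N y (cs[p:=c])) = 0"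
    proof (intro allI impI)
      fix cs' :: "'n list" assume "length cs' = k"
      then have "(\<Sum>a\<in>UNIV. tv $ a * N y (cs'[p:=a])) = 0" using h0 cp by blast
      then show "(\<Sum>c\<in>UNIV. (\<Sum>b\<in>UNIV. w$b * G$b$c) * N y (cs'[p:=c])) = 0"
        unfolding tv_def by simp
    qed
    have pk: "p < k" and lc: "length cs = k" using cp by auto
    have lk: "length (cs[p:=b]) = k" for b using lc by simp
    have "(\<Sum>b\<in>UNIV. w$b * (\<Sum>bs\<in>klists k. (\<Prod>j<k. G $ (cs[p:=b] ! j) $ (bs ! j)) * N y bs)) = 0"
      by (rule raise_contr[OF pk lc h])
    then show "(\<Sum>b\<in>UNIV. grad (\<psi> i) y $ b * M y (cs[p:=b])) = 0"
      unfolding M_def raise_def lk w_def[symmetric] G_def[symmetric] .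
  qed
  have mainI: "(\<Sum>b\<in>UNIV. grad (\<psi> i) x $ b * cov_div g M x (bs[j:=b])) = 0"
    if i: "i < CARD('n) - k" for i
  proof -
    have "smooth_on V (\<psi> i)" using psis i by blast
    then show ?thesis using main_ident[OF V(1,2) _ Md contr[OF i] anti Gsym conjunct1[OF bj] conjunct2[OF bj]] by blast
  qed
  have tauspan: "g x *v t \<in> span ((\<lambda>i. grad (\<psi> i) x) ` {..< CARD('n) - k})"
  proof (rule annih_in_span)
    fix z assume z: "\<forall>w\<in>(\<lambda>i. grad (\<psi> i) x) ` {..<CARD('n) - k}. w \<bullet> z = 0"
    then have zn: "z \<in> normal_space g \<Phi> k x" using Vp V(2) by auto
    have inv: "invertible (g x)" using dets x invertible_det_nz by blast
    have sub: "subspace {z. (g x *v t) \<bullet> z = 0}"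
      unfolding subspace_def by (auto simp: inner_add_right)
    have gen: "(g x *v t) \<bullet> (ginv g x *v grad (\<Phi> l) x) = 0" if "l < k" for l
    proof -
      have "(g x *v t) \<bullet> (ginv g x *v grad (\<Phi> l) x) = (ginv g x *v grad (\<Phi> l) x) \<bullet> (g x *v t)"
        by (rule inner_commute)
      also have "\<dots> = (transpose (g x) *v (ginv g x *v grad (\<Phi> l) x)) \<bullet> t" by (rule inner_mv)
      also have "transpose (g x) *v (ginv g x *v grad (\<Phi> l) x) = grad (\<Phi> l) x"
        using g_sym x matrix_inv_both[OF inv] by (simp add: matrix_vector_mul_assoc ginv_def)
      finally show ?thesis using tt that unfolding tangent_vec_def by simp
    qed
    show "(g x *v t) \<bullet> z = 0"
      using span_induct[OF zn[unfolded normal_space_def], of "\<lambda>z. (g x *v t) \<bullet> z = 0"] sub gen by auto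
  qed
  have "(\<Sum>b\<in>UNIV. (g x *v t) $ b * cov_div g M x (bs[j:=b])) = 0"
    by (rule span_zero_prop[OF tauspan]) (use mainI in auto)
  then show "(\<Sum>b\<in>UNIV. (g x *v t) $ b * cov_div g (raise g N) x (bs[j:=b])) = 0"
    unfolding M_def .
qed


end
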